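(* For every integer $r\ge0$, $\lambda\ge0$ and $y\in\mathbb{R}^n$, $$\max_{J\in\mathcal{I}:\, n\in J}\ \min_{I\in\mathcal{I}:\, n\in I,\ I\subseteq J}\Big[(P^{(|I|,r)}y_I)_n+\frac{\lambda C_{I,J}}{|I|}\Big]\le\min_{J\in\mathcal{I}:\, n\in J}\ \max_{I\in\mathcal{I}:\, n\in I,\ I\subseteq J}\Big[(P^{(|I|,r)}y_I)_n-\frac{\lambda C_{I,J}}{|I|}\Big],$$ and likewise $$\max_{J\in\mathcal{D}_n}\ \min_{I\in\mathcal{D}_n:\, I\subseteq J}\Big[(P^{(|I|,r)}y_I)_n+\frac{\lambda C_{I,J}}{|I|}\Big]\le\min_{J\in\mathcal{D}_n}\ \max_{I\in\mathcal{D}_n:\, I\subseteq J}\Big[(P^{(|I|,r)}y_I)_n-\frac{\lambda C_{I,J}}{|I|}\Big].$$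
   Context: $[n]=\{1,\dots,n\}$; an interval is $[a:b]=\{a,\dots,b\}$; $\mathcal{I}$ the set of all intervals of $[n]$. For $I=[a:b]$, $P^{(|I|,r)}$ is the orthogonal projection in $\mathbb{R}^{|I|}$ onto $\{(p(a/n),\dots,p(b/n)):p\text{ polynomial of degree}\le r\}$ and $(P^{(|I|,r)}y_I)_n$ is the last entry of $P^{(|I|,r)}y_I$ when $n\in I$. Here, for intervals $I\subseteq J$ both containing $n$: $C_{I,J}=1$ if $I\ne J$ and $C_{I,J}=-1$ if $I=J$. $\mathcal{D}_n=\{[l:n]: l\in\mathcal{L}_n\}$ where (for $n$ a power of 2, dyadic intervals being $[1:n]$ and all intervals obtained by repeated halving, forming a binary tree with singleton leaves at level $0$ and size $2^j$ at level $-j$) $\mathcal{L}_n=\{l_0,l_1,\dots\}$ with $l_0=n$, and if $l_j\ne1$ is the left endpoint of the level $-j$ dyadic interval $N$, then $l_{j+1}$ is the left endpoint of the parent of $N$ if $N$ is a right child, and the left endpoint of the dyadic interval immediately left of the parent if $N$ is a left child; stop when $l_j=1$. *)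

theory Defs
  imports Complex_Main "HOL-Computational_Algebra.Polynomial"
begin

definition intervals :: "nat \<Rightarrow> nat set set" where
  "intervals n = {{a..b} | a b. 1 \<le> a \<and> a \<le> b \<and> b \<le> n}"

text \<open>Orthogonal projection of y restricted to I onto the space of vectors
  (p(i/n))_{i in I}, p a real polynomial of degree <= r, evaluated at the
  coordinate n (the last entry of I when n is in I).  The projection v = P y
  is characterised as the element of the subspace with y - v orthogonal to
  the subspace.\<close>
definition proj_last :: "nat \<Rightarrow> nat \<Rightarrow> nat set \<Rightarrow> (nat \<Rightarrow> real) \<Rightarrow> real" where
  "proj_last n r I y =
     (THE t. \<exists>p :: real poly. degree p \<le> r \<and> t = poly p (real n / real n) \<and>
        (\<forall>q :: real poly. degree q \<le> r \<longrightarrow>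
           (\<Sum>i\<in>I. (y i - poly p (real i / real n)) * poly q (real i / real n)) = 0))"

definition Cc :: "nat set \<Rightarrow> nat set \<Rightarrow> real" where
  "Cc I J = (if I \<noteq> J then 1 else -1)"

text \<open>The sequence l_0, l_1, ... of left endpoints (for n a power of 2).
  If l_j is the left endpoint of the level -j dyadic interval
  [i 2^j + 1 : (i+1) 2^j] (so i = (l_j - 1) div 2^j), it is a right child iff i is odd;
  then the parent's left endpoint is l_j - 2^j, otherwise the left endpoint of the
  level -(j+1) interval immediately left of the parent is l_j - 2^(j+1).\<close>
fun dyL :: "nat \<Rightarrow> nat \<Rightarrow> nat" where
  "dyL n 0 = n"
| "dyL n (Suc j) = (let l = dyL n j in
     if l = 1 then 1
     else if odd ((l - 1) div 2 ^ j) then l - 2 ^ j else l - 2 ^ Suc j)"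

definition Ln :: "nat \<Rightarrow> nat set" where
  "Ln n = range (dyL n)"

definition Dn :: "nat \<Rightarrow> nat set set" where
  "Dn n = {{l..n} | l. l \<in> Ln n}"

end

theory Submission
  imports Defs
begin

lemma chain_minmax:
  fixes F :: "nat set set" and f :: "nat set \<Rightarrow> real" and lam :: real
  assumes fin: "finite F" and ne: "F \<noteq> {}" and ch: "\<And>A B. A \<in> F \<Longrightarrow> B \<in> F \<Longrightarrow> A \<subseteq> B \<or> B \<subseteq> A"
    and lam: "lam \<ge> 0"
  shows "Max ((\<lambda>J. Min ((\<lambda>I. f I + lam * Cc I J / real (card I)) ` {I \<in> F. I \<subseteq> J})) ` F)
       \<le> Min ((\<lambda>J. Max ((\<lambda>I. f I - lam * Cc I J / real (card I)) ` {I \<in> F. I \<subseteq> J})) ` F)"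
proof -
  have key: "Min ((\<lambda>I. f I + lam * Cc I J1 / real (card I)) ` {I \<in> F. I \<subseteq> J1})
     \<le> Max ((\<lambda>I. f I - lam * Cc I J2 / real (card I)) ` {I \<in> F. I \<subseteq> J2})"
    if J1: "J1 \<in> F" and J2: "J2 \<in> F" for J1 J2
  proof -
    have f1: "finite {I \<in> F. I \<subseteq> J1}" "finite {I \<in> F. I \<subseteq> J2}" using fin by auto
    have nn: "lam / real (card I) \<ge> 0" for I using lam by simp
    show ?thesis
    proof (cases "J1 \<subseteq> J2")
      case True
      have "Min ((\<lambda>I. f I + lam * Cc I J1 / real (card I)) ` {I \<in> F. I \<subseteq> J1})
          \<le> f J1 + lam * Cc J1 J1 / real (card J1)"
        using f1 J1 by (intro Min_le) auto
      also have "\<dots> \<le> f J1 - lam * Cc J1 J2 / real (card J1)"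
        using nn[of J1] by (auto simp: Cc_def)
      also have "\<dots> \<le> Max ((\<lambda>I. f I - lam * Cc I J2 / real (card I)) ` {I \<in> F. I \<subseteq> J2})"
        using f1 J1 True by (intro Max_ge) auto
      finally show ?thesis .
    next
      case False
      then have T: "J2 \<subseteq> J1" "J2 \<noteq> J1" using ch[OF J1 J2] by auto
      have "Min ((\<lambda>I. f I + lam * Cc I J1 / real (card I)) ` {I \<in> F. I \<subseteq> J1})
          \<le> f J2 + lam * Cc J2 J1 / real (card J2)"
        using f1 J2 T by (intro Min_le) auto
      also have "\<dots> \<le> f J2 - lam * Cc J2 J2 / real (card J2)"
        using nn[of J2] T by (auto simp: Cc_def)
      also have "\<dots> \<le> Max ((\<lambda>I. f I - lam * Cc I J2 / real (card I)) ` {I \<in> F. I \<subseteq> J2})"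
        using f1 J2 by (intro Max_ge) auto
      finally show ?thesis .
    qed
  qed
  show ?thesis
    using fin ne key by (subst Max_le_iff) (auto simp: Min_ge_iff)
qed

lemma dyL_le: "dyL n j \<le> n"
  by (induction j) (auto simp: Let_def)

theorem lemma3:
  fixes n r :: nat and lam :: real and y :: "nat \<Rightarrow> real"
  assumes "n \<ge> 1" and "lam \<ge> 0"
  shows "Max ((\<lambda>J. Min ((\<lambda>I. proj_last n r I y + lam * Cc I J / real (card I))
               ` {I \<in> intervals n. n \<in> I \<and> I \<subseteq> J}))
           ` {J \<in> intervals n. n \<in> J})
       \<le> Min ((\<lambda>J. Max ((\<lambda>I. proj_last n r I y - lam * Cc I J / real (card I))
               ` {I \<in> intervals n. n \<in> I \<and> I \<subseteq> J}))
           ` {J \<in> intervals n. n \<in> J})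
    \<and> ((\<exists>k. n = 2 ^ k) \<longrightarrow>
         Max ((\<lambda>J. Min ((\<lambda>I. proj_last n r I y + lam * Cc I J / real (card I))
               ` {I \<in> Dn n. I \<subseteq> J}))
           ` Dn n)
       \<le> Min ((\<lambda>J. Max ((\<lambda>I. proj_last n r I y - lam * Cc I J / real (card I))
               ` {I \<in> Dn n. I \<subseteq> J}))
           ` Dn n))"
proof (intro conjI impI)
  let ?F = "{J \<in> intervals n. n \<in> J}"
  have eq: "{I \<in> intervals n. n \<in> I \<and> I \<subseteq> J} = {I \<in> ?F. I \<subseteq> J}" for J by auto
  have fin: "finite ?F"
    by (rule finite_subset[of _ "Pow {1..n}"]) (auto simp: intervals_def)
  have ne: "?F \<noteq> {}"
  proof -
    have "{1..n} \<in> ?F" using assms(1) unfolding intervals_def by auto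
    then show ?thesis by blast
  qed
  have ch: "A \<subseteq> B \<or> B \<subseteq> A" if "A \<in> ?F" "B \<in> ?F" for A B
    using that unfolding intervals_def by auto
  show "Max ((\<lambda>J. Min ((\<lambda>I. proj_last n r I y + lam * Cc I J / real (card I))
               ` {I \<in> intervals n. n \<in> I \<and> I \<subseteq> J}))
           ` {J \<in> intervals n. n \<in> J})
       \<le> Min ((\<lambda>J. Max ((\<lambda>I. proj_last n r I y - lam * Cc I J / real (card I))
               ` {I \<in> intervals n. n \<in> I \<and> I \<subseteq> J}))
           ` {J \<in> intervals n. n \<in> J})"
    unfolding eq by (rule chain_minmax[OF fin ne ch assms(2)])
next
  have fin: "finite (Dn n)"
    by (rule finite_subset[of _ "Pow {0..n}"]) (auto simp: Dn_def)
  have ne: "Dn n \<noteq> {}"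
  proof -
    have "{dyL n 0..n} \<in> Dn n" unfolding Dn_def Ln_def by blast
    then show ?thesis by blast
  qed
  have ch: "A \<subseteq> B \<or> B \<subseteq> A" if "A \<in> Dn n" "B \<in> Dn n" for A B
    using that unfolding Dn_def by auto
  show "Max ((\<lambda>J. Min ((\<lambda>I. proj_last n r I y + lam * Cc I J / real (card I))
               ` {I \<in> Dn n. I \<subseteq> J}))
           ` Dn n)
       \<le> Min ((\<lambda>J. Max ((\<lambda>I. proj_last n r I y - lam * Cc I J / real (card I))
               ` {I \<in> Dn n. I \<subseteq> J}))
           ` Dn n)"
    by (rule chain_minmax[OF fin ne ch assms(2)])
qed

end
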